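(* For every positive integer $n$ and every string $u$ of length $n$ over a finite alphabet, the sum of the exponents of all runs in $u$ is less than $4.1\,n$.
   Context: For a word $u=u_1\cdots u_m$, the (shortest) period is the smallest positive integer $p$ with $u_i=u_{i+p}$ for all $1\le i\le m-p$; $u[i..j]=u_i\cdots u_j$. A run in $u$ is an interval $[i..j]$ such that the period $p$ of $u[i..j]$ satisfies $2p\le j-i+1$, and $u[i-1]\ne u[i+p-1]$ (or $i=1$) and $u[j-p+1]\ne u[j+1]$ (or $j=|u|$). Its exponent is $(j-i+1)/p$. *)

theory Defs
  imports Complex_Main
begin

(* Words are lists; the paper's 1-indexed letter u_i is  u ! (i - 1). *)

definition is_period :: "'a list \<Rightarrow> nat \<Rightarrow> bool" where
  "is_period w p \<longleftrightarrow> 0 < p \<and> (\<forall>k. k + p < length w \<longrightarrow> w ! k = w ! (k + p))"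

(* shortest period (for nonempty w, p = |w| is always a period) *)
definition period :: "'a list \<Rightarrow> nat" where
  "period w = (LEAST p. is_period w p)"

(* the factor u[i..j] = u_i ... u_j, 1-indexed *)
definition factor :: "'a list \<Rightarrow> nat \<Rightarrow> nat \<Rightarrow> 'a list" where
  "factor u i j = take (j + 1 - i) (drop (i - 1) u)"

definition letter :: "'a list \<Rightarrow> nat \<Rightarrow> 'a" where
  "letter u i = u ! (i - 1)"

definition is_run :: "'a list \<Rightarrow> nat \<Rightarrow> nat \<Rightarrow> bool" where
  "is_run u i j \<longleftrightarrow>
     1 \<le> i \<and> i \<le> j \<and> j \<le> length u \<and>
     (let p = period (factor u i j) in
        2 * p \<le> j - i + 1 \<and>
        (i = 1 \<or> letter u (i - 1) \<noteq> letter u (i + p - 1)) \<and>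
        (j = length u \<or> letter u (j - p + 1) \<noteq> letter u (j + 1)))"

definition runs :: "'a list \<Rightarrow> (nat \<times> nat) set" where
  "runs u = {(i, j). is_run u i j}"

definition run_exponent :: "'a list \<Rightarrow> nat \<times> nat \<Rightarrow> real" where
  "run_exponent u r = real (snd r - fst r + 1) / real (period (factor u (fst r) (snd r)))"

end

theory Submission imports Defs "HOL-Library.List_Lexorder" begin

definition fac :: "(nat \<Rightarrow> 'b) \<Rightarrow> nat \<Rightarrow> nat \<Rightarrow> 'b list" where
  "fac w i l = map (\<lambda>t. w (i+t)) [0..<l]"

lemma length_fac[simp]: "length (fac w i l) = l" by (simp add: fac_def)
lemma nth_fac[simp]: "t < l \<Longrightarrow> fac w i l ! t = w (i+t)" by (simp add: fac_def)
lemma take_fac: "take k (fac w i l) = fac w i (min k l)"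
  by (rule nth_equalityI) auto
lemma drop_fac: "drop k (fac w i l) = fac w (i+k) (l-k)"
  by (rule nth_equalityI) (auto simp: add.assoc)
lemma fac_eq: "fac w i l = fac v j l \<longleftrightarrow> (\<forall>t<l. w(i+t) = v(j+t))"
  by (auto simp: list_eq_iff_nth_eq)

lemma fac_less: "fac w i l < fac v j m \<longleftrightarrow>
   (l < m \<and> (\<forall>t<l. w(i+t) = v(j+t))) \<or>
   (\<exists>d<min l m. (\<forall>t<d. w(i+t) = v(j+t)) \<and> w(i+d) < v(j+d))"
proof -
  have "fac w i l < fac v j m \<longleftrightarrow> (l < m \<and> take l (fac v j m) = fac w i l) \<or>
     (\<exists>d. d < min l m \<and> take d (fac w i l) = take d (fac v j m) \<and> fac w i l ! d < fac v j m ! d)"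
    unfolding list_less_def lexord_take_index_conv by simp
  also have "\<dots> \<longleftrightarrow> (l < m \<and> (\<forall>t<l. w(i+t) = v(j+t))) \<or>
   (\<exists>d<min l m. (\<forall>t<d. w(i+t) = v(j+t)) \<and> w(i+d) < v(j+d))"
    by (auto simp: take_fac fac_eq min_def)
  finally show ?thesis .
qed

definition lyndon :: "'b::linorder list \<Rightarrow> bool" where
  "lyndon x \<longleftrightarrow> x \<noteq> [] \<and> (\<forall>k. 0<k \<and> k<length x \<longrightarrow> x < drop k x)"

lemma lyndon_fac: "lyndon (fac W i l) \<longleftrightarrow> 0<l \<and> (\<forall>k. 0<k \<and> k<l \<longrightarrow> fac W i l < fac W (i+k) (l-k))"
proof -
  have "fac W i l = [] \<longleftrightarrow> l = 0" by (simp add: fac_def)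
  then show ?thesis unfolding lyndon_def by (auto simp: drop_fac)
qed

lemma lyndon_last:
  fixes W :: "nat \<Rightarrow> 'b::linorder"
  assumes "lyndon (fac W i l)" "2 \<le> l"
  shows "W i < W (i+(l-1))"
proof -
  have H: "\<forall>k. 0<k \<and> k<l \<longrightarrow> fac W i l < fac W (i+k) (l-k)" using assms unfolding lyndon_fac by auto
  have "0 < l-1 \<and> l-1 < l" using assms(2) by auto
  then have "fac W i l < fac W (i+(l-1)) (l-(l-1))" using H by blast
  then show ?thesis unfolding fac_less using assms(2) by auto
qed

lemma lyndon_first:
  fixes W :: "nat \<Rightarrow> 'b::linorder"
  assumes "lyndon (fac W i l)" "2 \<le> l"
  shows "\<exists>k. 0<k \<and> (\<forall>t<k. W(i+t) = W i) \<and> W i < W(i+k)"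
proof -
  have H: "\<forall>k. 0<k \<and> k<l \<longrightarrow> fac W i l < fac W (i+k) (l-k)" using assms unfolding lyndon_fac by auto
  have ex: "\<exists>t. t<l \<and> W(i+t) \<noteq> W i"
  proof (rule ccontr)
    assume "\<not> ?thesis"
    hence eq: "\<forall>t<l. W(i+t) = W i" by auto
    have "0<(1::nat) \<and> 1<l" using assms(2) by auto
    then have "fac W i l < fac W (i+1) (l-1)" using H by blast
    then obtain d where d: "d<min l (l-1)" "W(i+d) < W(i+1+d)"
      unfolding fac_less by auto
    have e1: "W(i+d) = W i" using eq d(1) by simp
    have "1+d < l" using d(1) by simp
    then have e2: "W(i+(1+d)) = W i" by (rule eq[rule_format])
    have e3: "W(i+1+d) = W i" using e2 by (metis add.assoc)
    show False using d(2) e1 e3 by simp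
  qed
  define k where "k = (LEAST t. t<l \<and> W(i+t) \<noteq> W i)"
  have k: "k<l" "W(i+k) \<noteq> W i" using LeastI_ex[OF ex] unfolding k_def by auto
  have kmin: "\<forall>t<k. W(i+t) = W i"
  proof (intro allI impI)
    fix t assume "t<k"
    then have "\<not>(t<l \<and> W(i+t) \<noteq> W i)" unfolding k_def by (rule not_less_Least)
    then show "W(i+t) = W i" using \<open>t<k\<close> k(1) by auto
  qed
  have k0: "0<k" using k(2) by (cases k) auto
  have "fac W i l < fac W (i+k) (l-k)" using H k k0 by blast
  then obtain d where d: "d<min l (l-k)" "\<forall>t<d. W(i+t) = W(i+k+t)" "W(i+d) < W(i+k+d)"
    unfolding fac_less by auto
  have "d = 0"
  proof (rule ccontr)
    assume "d \<noteq> 0"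
    hence "W(i+0) = W(i+k+0)" using d(2) by auto
    thus False using k(2) by simp
  qed
  then show ?thesis using k0 kmin d(3) by auto
qed

definition per :: "(nat \<Rightarrow> 'b) \<Rightarrow> nat \<Rightarrow> nat \<Rightarrow> nat \<Rightarrow> bool" where
  "per W a L p \<longleftrightarrow> (\<forall>q. a \<le> q \<and> q+p < a+L \<longrightarrow> W q = W (q+p))"

lemma per_iter: "per W a L p \<Longrightarrow> a \<le> q \<Longrightarrow> q + k*p < a+L \<Longrightarrow> W q = W (q+k*p)"
proof (induction k)
  case 0 then show ?case by simp
next
  case (Suc k)
  have "W q = W (q+k*p)" using Suc by auto
  also have "\<dots> = W (q+k*p+p)" using Suc.prems unfolding per_def by (auto simp: add.assoc)
  also have "\<dots> = W (q + Suc k * p)" by (simp add: algebra_simps)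
  finally show ?case .
qed

lemma key:
  fixes W :: "nat \<Rightarrow> 'b::linorder"
  assumes "per W a L p" "0<p" "a \<le> i" "i + p \<le> a+L" "p < p'" "i + p' \<le> n"
    "a+L = n \<or> W(a+L) < W(a+L-p)" "lyndon (fac W i p')"
  shows False
proof -
  have lt: "fac W i p' < fac W (i+p) (p'-p)" using assms(2,5,8) unfolding lyndon_fac by blast
  then obtain d where d: "d<min p' (p'-p)" "\<forall>t<d. W(i+t) = W(i+p+t)" "W(i+d) < W(i+p+d)"
    unfolding fac_less by auto
  show False
  proof (cases "i+p+d < a+L")
    case True
    then have "W(i+d) = W(i+d+p)" using assms(1,3) unfolding per_def by auto
    then show ?thesis using d(3) by (simp add: add.commute add.left_commute)
  next
    case False
    define D where "D = a+L-(i+p)"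
    have D: "D \<le> d" "i+p+D = a+L" using False assms(4) unfolding D_def by auto
    have "a+L < n" using D d assms(6) by auto
    then have lt2: "W(a+L) < W(a+L-p)" using assms(7) by auto
    have eqD: "W(i+D) = W(a+L-p)" using D(2) by (metis add_diff_cancel_right' add.assoc add.commute)
    show ?thesis
    proof (cases "D = d")
      case True then show ?thesis using d(3) lt2 eqD D(2) by auto
    next
      case False
      then have "W(i+D) = W(i+p+D)" using d(2) D(1) by auto
      then show ?thesis using lt2 eqD D(2) by auto
    qed
  qed
qed

lemma mod_shift_aux: "0 < (p::nat) \<Longrightarrow> (d0 + (x + (p - d0 mod p)) mod p) mod p = x mod p"
proof -
  assume p: "0<p"
  have "(d0 + (x + (p - d0 mod p)) mod p) mod p = (d0 + (x + (p - d0 mod p))) mod p"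
    by (simp add: mod_add_right_eq)
  also have "d0 + (x + (p - d0 mod p)) = x + (d0 div p + 1) * p"
  proof -
    have h1: "d0 div p * p + d0 mod p = d0" by (rule div_mult_mod_eq)
    have h2: "d0 mod p < p" using p by simp
    have "d0 + (x + (p - d0 mod p)) = x + d0 div p * p + p" using h1 h2 by linarith
    then show ?thesis by (simp add: algebra_simps)
  qed
  also have "(x + (d0 div p + 1) * p) mod p = x mod p" by (rule mod_mult_self1)
  finally show ?thesis .
qed

lemma exists_root:
  fixes W :: "nat \<Rightarrow> 'b::linorder"
  assumes per: "per W a L p" and p0: "0<p" and pL: "2*p \<le> L"
    and minp: "\<forall>k. 0<k \<and> k<p \<longrightarrow> \<not> per W a L k"
  shows "\<exists>s. a < s \<and> s \<le> a+p \<and> lyndon (fac W s p)"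
proof -
  define c where "c t = W (a + t mod p)" for t
  have cW: "W q = c (q-a)" if "a \<le> q" "q < a+L" for q
  proof -
    define t where "t = q - a"
    have "W (a + t mod p) = W (a + t mod p + (t div p)*p)"
      by (rule per_iter[OF per]) (use that in \<open>auto simp: t_def\<close>)
    also have "a + t mod p + (t div p)*p = q" using that by (simp add: t_def)
    finally show ?thesis by (simp add: c_def t_def)
  qed
  have cmod: "c x = c y" if "x mod p = y mod p" for x y using that by (simp add: c_def)
  define R where "R d = fac c d p" for d
  have Rmod: "R d = R (d mod p)" for d
    unfolding R_def fac_eq by (auto intro!: cmod simp: mod_add_left_eq)
  define m where "m = Min (R ` {1..p})"
  have "m \<in> R ` {1..p}" unfolding m_def using p0 by (intro Min_in) auto
  then obtain d0 where d0: "d0 \<in> {1..p}" "R d0 = m" by auto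
  have Rmin: "R d0 \<le> R d" for d
  proof -
    define e where "e = (if d mod p = 0 then p else d mod p)"
    have "e \<in> {1..p}" using p0 by (auto simp: e_def)
    moreover have "R d = R e" using Rmod[of d] Rmod[of p] by (auto simp: e_def)
    ultimately show ?thesis unfolding d0(2) m_def by auto
  qed
  have Rneq: "R (d0+k) \<noteq> R d0" if k: "0<k" "k<p" for k
  proof
    assume "R (d0+k) = R d0"
    then have eq: "\<forall>t<p. c(d0+k+t) = c(d0+t)" unfolding R_def fac_eq by simp
    have call: "c (x+k) = c x" for x
    proof -
      define t where "t = (x + (p - d0 mod p)) mod p"
      have tp: "t < p" using p0 by (simp add: t_def)
      have tm: "(d0 + t) mod p = x mod p" unfolding t_def using mod_shift_aux[OF p0] .
      have "c x = c (d0+t)" by (rule cmod) (simp add: tm)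
      moreover have "c (x+k) = c (d0+k+t)" by (rule cmod) (metis tm add.commute add.left_commute mod_add_left_eq)
      ultimately show ?thesis using eq tp by simp
    qed
    have "per W a L k" unfolding per_def
    proof (intro allI impI)
      fix q assume q: "a \<le> q \<and> q+k < a+L"
      have "W q = c (q-a)" using q by (intro cW) auto
      also have "\<dots> = c (q-a+k)" using call by simp
      also have "\<dots> = W (q+k)" using q cW[of "q+k"] by simp
      finally show "W q = W (q+k)" .
    qed
    then show False using minp k by auto
  qed
  have Rlt: "R d0 < R (d0+k)" if "0<k" "k<p" for k
    using Rmin[of "d0+k"] Rneq[OF that] by (simp add: order.order_iff_strict)
  have lyn: "lyndon (fac c d0 p)" unfolding lyndon_fac
  proof (intro conjI allI impI)
    show "0<p" by fact
    fix k assume k: "0<k \<and> k<p"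
    have "R d0 < R (d0+k)" using Rlt k by auto
    then obtain d where d: "d<p" "\<forall>t<d. c(d0+t) = c(d0+k+t)" "c(d0+d) < c(d0+k+d)"
      unfolding R_def fac_less by auto
    show "fac c d0 p < fac c (d0+k) (p-k)"
    proof (cases "d < p-k")
      case True
      then show ?thesis unfolding fac_less using d by auto
    next
      case False
      define j where "j = p-k"
      define t0 where "t0 = d - j"
      have t0: "t0 < k" "d = j + t0" using False d(1) k by (auto simp: t0_def j_def)
      have jk: "j + k = p" using k by (simp add: j_def)
      have shift: "c(d0+k+(j+t)) = c(d0+t)" for t
        by (rule cmod) (metis jk add.commute add.left_commute mod_add_self2)
      have "R (d0+j) < R d0" unfolding R_def fac_less
      proof (rule disjI2, intro exI conjI)
        show "t0 < min p p" using t0 k by auto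
        show "\<forall>t<t0. c (d0 + j + t) = c (d0 + t)"
        proof (intro allI impI)
          fix t assume "t<t0"
          then have "c(d0+(j+t)) = c(d0+k+(j+t))" using d(2) t0 by auto
          then show "c (d0 + j + t) = c (d0 + t)" using shift[of t] by (simp add: add.assoc)
        qed
        show "c (d0 + j + t0) < c (d0 + t0)" using d(3) shift[of t0] t0(2) by (simp add: add.assoc)
      qed
      then show ?thesis using Rmin[of "d0+j"] by simp
    qed
  qed
  have "fac W (a+d0) p = fac c d0 p" unfolding fac_eq
  proof (intro allI impI)
    fix t assume "t<p"
    then show "W (a + d0 + t) = c (d0 + t)" using cW[of "a+d0+t"] d0(1) pL by auto
  qed
  then show ?thesis using lyn d0(1) by (intro exI[of _ "a+d0"]) auto
qed

definition RUN :: "(nat \<Rightarrow> 'a) \<Rightarrow> nat \<Rightarrow> nat \<Rightarrow> nat \<Rightarrow> nat \<Rightarrow> bool" where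
  "RUN w n a L p \<longleftrightarrow> 0<p \<and> 2*p \<le> L \<and> a+L \<le> n \<and> per w a L p \<and>
     (\<forall>k. 0<k \<and> k<p \<longrightarrow> \<not> per w a L k) \<and>
     (a = 0 \<or> w(a-1) \<noteq> w(a-1+p)) \<and> (a+L = n \<or> w(a+L-p) \<noteq> w(a+L))"

lemma per_transfer: "\<forall>q q'. W q = W q' \<longleftrightarrow> w q = w q' \<Longrightarrow> per W a L p \<longleftrightarrow> per w a L p"
  by (simp add: per_def)

lemma count_B:
  fixes W :: "nat \<Rightarrow> 'b::linorder"
  assumes R: "RUN w n a L p" and hW: "\<forall>q q'. W q = W q' \<longleftrightarrow> w q = w q'"
  shows "real L / real p \<le> 3 * real (card {s. a < s \<and> s + p \<le> a+L \<and> lyndon (fac W s p)})"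
proof -
  have p0: "0<p" and pL: "2*p \<le> L" and per: "per W a L p" and minp: "\<forall>k. 0<k \<and> k<p \<longrightarrow> \<not> per W a L k"
    using R per_transfer[OF hW] unfolding RUN_def by auto
  obtain s0 where s0: "a < s0" "s0 \<le> a+p" "lyndon (fac W s0 p)"
    using exists_root[OF per p0 pL minp] by blast
  define m where "m = L div p"
  have m2: "2 \<le> m"
  proof -
    have "(2*p) div p \<le> L div p" using pL by (rule div_le_mono)
    moreover have "(2*p) div p = 2" using p0 by simp
    ultimately show ?thesis unfolding m_def by simp
  qed
  have mp: "m*p \<le> L" unfolding m_def by (metis div_mult_mod_eq le_add1)
  have Lm: "L < (m+1)*p"
  proof -
    have h1: "L div p * p + L mod p = L" by (rule div_mult_mod_eq)
    have h2: "L mod p < p" using p0 by simp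
    have "(m+1)*p = L div p * p + p" unfolding m_def by (simp add: algebra_simps)
    then show ?thesis using h1 h2 by linarith
  qed
  define S where "S = {s. a < s \<and> s + p \<le> a+L \<and> lyndon (fac W s p)}"
  define g where "g k = s0 + k*p" for k
  have gS: "g ` {..<m-1} \<subseteq> S"
  proof
    fix x assume "x \<in> g ` {..<m-1}"
    then obtain k where k: "k < m-1" "x = g k" by auto
    have "(k+1)*p \<le> (m-1)*p" using k(1) by (intro mult_right_mono) auto
    then have "k*p + p \<le> m*p - p" by (simp add: algebra_simps diff_mult_distrib)
    moreover have "p \<le> m*p" using m2 by simp
    ultimately have b: "s0 + k*p + p \<le> a + L" using s0(2) mp by linarith
    have "fac W (s0 + k*p) p = fac W s0 p" unfolding fac_eq
    proof (intro allI impI)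
      fix t assume "t<p"
      have "W (s0+t) = W (s0+t+k*p)" by (rule per_iter[OF per]) (use s0 b \<open>t<p\<close> in auto)
      then show "W (s0 + k*p + t) = W (s0 + t)" by (simp add: algebra_simps)
    qed
    then show "x \<in> S" using s0 b k unfolding S_def g_def by auto
  qed
  have inj: "inj_on g {..<m-1}" unfolding g_def inj_on_def using p0 by auto
  have fin: "finite S" unfolding S_def by (rule finite_subset[of _ "{..a+L}"]) auto
  have "m - 1 \<le> card S" using card_mono[OF fin gS] card_image[OF inj] by simp
  then have c: "real m - 1 \<le> real (card S)" using m2 by linarith
  have "real L < (real m + 1) * real p" using Lm by (metis of_nat_add of_nat_1 of_nat_less_iff of_nat_mult)
  then have "real L / real p < real m + 1" using p0 by (simp add: divide_less_eq)
  also have "\<dots> \<le> 3 * (real m - 1)" using m2 by simp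
  also have "\<dots> \<le> 3 * real (card S)" using c by simp
  finally show ?thesis unfolding S_def by simp
qed

lemma runs_eq:
  assumes R: "RUN w n a L p" and R': "RUN w n a' L' p"
    and s: "a \<le> s" "s+p \<le> a+L" "a' \<le> s" "s+p \<le> a'+L'"
  shows "a = a' \<and> L = L'"
proof -
  have P: "per w a L p" "per w a' L' p" and lm: "a = 0 \<or> w(a-1) \<noteq> w(a-1+p)" "a' = 0 \<or> w(a'-1) \<noteq> w(a'-1+p)"
    and rm: "a+L = n \<or> w(a+L-p) \<noteq> w(a+L)" "a'+L' = n \<or> w(a'+L'-p) \<noteq> w(a'+L')"
    and le: "a+L \<le> n" "a'+L' \<le> n" and p0: "0<p"
    using R R' unfolding RUN_def by auto
  have "\<not> a' < a"
  proof
    assume "a' < a"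
    then have "a' \<le> a-1 \<and> a-1+p < a'+L'" using s p0 by auto
    then have "w(a-1) = w(a-1+p)" using P(2) unfolding per_def by blast
    then show False using lm(1) \<open>a'<a\<close> by auto
  qed
  moreover have "\<not> a < a'"
  proof
    assume "a < a'"
    then have "a \<le> a'-1 \<and> a'-1+p < a+L" using s p0 by auto
    then have "w(a'-1) = w(a'-1+p)" using P(1) unfolding per_def by blast
    then show False using lm(2) \<open>a<a'\<close> by auto
  qed
  moreover have "\<not> a+L < a'+L'"
  proof
    assume h: "a+L < a'+L'"
    then have "a' \<le> a+L-p \<and> a+L-p+p < a'+L'" using s p0 by auto
    then have "w(a+L-p) = w(a+L-p+p)" using P(2) unfolding per_def by blast
    then show False using rm(1) h le s by auto
  qed
  moreover have "\<not> a'+L' < a+L"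
  proof
    assume h: "a'+L' < a+L"
    then have "a \<le> a'+L'-p \<and> a'+L'-p+p < a+L" using s p0 by auto
    then have "w(a'+L'-p) = w(a'+L'-p+p)" using P(1) unfolding per_def by blast
    then show False using rm(2) h le s by auto
  qed
  ultimately show ?thesis by auto
qed

lemma disjoint:
  fixes W W' :: "nat \<Rightarrow> 'b::linorder"
  assumes R: "RUN w n a L p" and R': "RUN w n a' L' p'"
    and hW: "\<forall>q q'. W q = W q' \<longleftrightarrow> w q = w q'" and hW': "\<forall>q q'. W' q = W' q' \<longleftrightarrow> w q = w q'"
    and rel: "W = W' \<or> (\<forall>q q'. W q < W q' \<longleftrightarrow> W' q' < W' q)"
    and oW: "a+L = n \<or> W(a+L) < W(a+L-p)" and oW': "a'+L' = n \<or> W'(a'+L') < W'(a'+L'-p')"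
    and s: "a < s" "s+p \<le> a+L" "lyndon (fac W s p)" "a' < s" "s+p' \<le> a'+L'" "lyndon (fac W' s p')"
  shows "a = a' \<and> L = L'"
proof -
  have p0: "0<p" "0<p'" and P: "per W a L p" "per W' a' L' p'" and le: "a+L \<le> n" "a'+L' \<le> n"
    using R R' per_transfer[OF hW] per_transfer[OF hW'] unfolding RUN_def by auto
  have one: "p = 1 \<longleftrightarrow> w(s-1) = w s"
  proof -
    have "a \<le> s-1 \<and> s-1+p < a+L" using s(1,2) p0 by auto
    then have eq: "W(s-1) = W(s-1+p)" using P(1) unfolding per_def by blast
    show ?thesis
    proof
      assume "p = 1" then show "w(s-1) = w s" using eq hW s(1) by auto
    next
      assume h: "w(s-1) = w s"
      show "p = 1"
      proof (rule ccontr)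
        assume "p \<noteq> 1" then have "2 \<le> p" using p0 by auto
        then have "W s < W (s+(p-1))" using lyndon_last s(3) by blast
        moreover have "s+(p-1) = s-1+p" using s(1) p0 by auto
        ultimately show False using eq h hW by (metis less_irrefl)
      qed
    qed
  qed
  have one': "p' = 1 \<longleftrightarrow> w(s-1) = w s"
  proof -
    have "a' \<le> s-1 \<and> s-1+p' < a'+L'" using s(4,5) p0 by auto
    then have eq: "W'(s-1) = W'(s-1+p')" using P(2) unfolding per_def by blast
    show ?thesis
    proof
      assume "p' = 1" then show "w(s-1) = w s" using eq hW' s(4) by auto
    next
      assume h: "w(s-1) = w s"
      show "p' = 1"
      proof (rule ccontr)
        assume "p' \<noteq> 1" then have "2 \<le> p'" using p0 by auto
        then have "W' s < W' (s+(p'-1))" using lyndon_last s(6) by blast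
        moreover have "s+(p'-1) = s-1+p'" using s(4) p0 by auto
        ultimately show False using eq h hW' by (metis less_irrefl)
      qed
    qed
  qed
  have pp: "p = p'"
  proof (cases "p = 1")
    case True then show ?thesis using one one' by simp
  next
    case False
    then have p2: "2 \<le> p" "2 \<le> p'" using one one' p0 by auto
    show ?thesis
    proof (cases "W = W'")
      case True
      show ?thesis
      proof (rule ccontr)
        assume "p \<noteq> p'"
        then consider "p < p'" | "p' < p" by linarith
        then show False
        proof cases
          case 1
          show False by (rule key[OF P(1) p0(1) _ s(2) 1, of n]) (use s le oW True in auto)
        next
          case 2
          show False by (rule key[OF P(2) p0(2) _ s(5) 2, of n]) (use s le oW' True in auto)
        qed
      qed
    next
      case False
      then have opp: "\<forall>q q'. W q < W q' \<longleftrightarrow> W' q' < W' q" using rel by auto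
      obtain k where k: "0<k" "\<forall>t<k. W(s+t) = W s" "W s < W(s+k)"
        using lyndon_first[OF s(3) p2(1)] by blast
      obtain k' where k': "0<k'" "\<forall>t<k'. W'(s+t) = W' s" "W' s < W'(s+k')"
        using lyndon_first[OF s(6) p2(2)] by blast
      have False
      proof (cases k k' rule: linorder_cases)
        case less
        then have "W'(s+k) = W' s" using k'(2) by auto
        then have "W(s+k) = W s" using hW hW' by auto
        then show False using k(3) by simp
      next
        case equal
        then show False using k(3) k'(3) opp by (meson less_asym)
      next
        case greater
        then have "W(s+k') = W s" using k(2) by auto
        then have "W'(s+k') = W' s" using hW hW' by auto
        then show False using k'(3) by simp
      qed
      then show ?thesis ..
    qed
  qed
  have "RUN w n a' L' p" using R' pp by simp
  then show ?thesis by (rule runs_eq[OF R]) (use s pp in auto)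
qed

lemma run_RUN:
  assumes "is_run u i j"
  shows "RUN (\<lambda>q. u!q) (length u) (i-1) (j+1-i) (period (factor u i j))"
    "1 \<le> i" "i \<le> j" "j \<le> length u"
proof -
  define x where "x = factor u i j"
  define L where "L = j+1-i"
  define a where "a = i-1"
  define p where "p = period x"
  have ij: "1 \<le> i" "i \<le> j" "j \<le> length u" using assms unfolding is_run_def by auto
  then show "1 \<le> i" "i \<le> j" "j \<le> length u" by auto
  have lx: "length x = L" using ij unfolding x_def factor_def L_def by auto
  have nx: "x!k = u!(a+k)" if "k<L" for k
    using that ij unfolding x_def factor_def L_def a_def by (auto simp: nth_take nth_drop)
  have L0: "0<L" using ij by (simp add: L_def)
  have ex: "is_period x L" unfolding is_period_def using L0 lx by auto
  have ip: "is_period x p" unfolding p_def period_def by (rule LeastI[of "is_period x", OF ex])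
  have pmin: "p \<le> k" if "is_period x k" for k unfolding p_def period_def by (rule Least_le[of "is_period x", OF that])
  have p0: "0<p" using ip unfolding is_period_def by auto
  have jL: "j - i + 1 = L" using ij by (simp add: L_def)
  have aL: "a+L = j" using ij by (simp add: a_def L_def)
  have r: "2*p \<le> L" "i = 1 \<or> letter u (i - 1) \<noteq> letter u (i + p - 1)"
     "j = length u \<or> letter u (j - p + 1) \<noteq> letter u (j + 1)"
    using assms unfolding is_run_def Let_def p_def x_def jL by auto
  have per: "per (\<lambda>q. u!q) a L p" unfolding per_def
  proof (intro allI impI)
    fix q assume q: "a \<le> q \<and> q+p < a+L"
    then have "x!(q-a) = x!(q-a+p)" using ip lx unfolding is_period_def by auto
    then show "u!q = u!(q+p)" using q nx[of "q-a"] nx[of "q-a+p"] by auto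
  qed
  have minp: "\<forall>k. 0<k \<and> k<p \<longrightarrow> \<not> per (\<lambda>q. u!q) a L k"
  proof (intro allI impI notI)
    fix k assume k: "0<k \<and> k<p" and pk: "per (\<lambda>q. u!q) a L k"
    have "is_period x k" unfolding is_period_def
    proof (intro conjI allI impI)
      show "0<k" using k by simp
      fix t assume "t + k < length x"
      then show "x!t = x!(t+k)" using pk lx nx[of t] nx[of "t+k"] unfolding per_def
        by (auto simp: add.assoc)
    qed
    then show False using pmin k by fastforce
  qed
  have lm: "a = 0 \<or> u!(a-1) \<noteq> u!(a-1+p)"
  proof (cases "i = 1")
    case True then show ?thesis by (simp add: a_def)
  next
    case False
    then have "letter u (i - 1) \<noteq> letter u (i + p - 1)" using r by auto
    moreover have "i - 1 - 1 = a - 1" "i + p - 1 - 1 = a - 1 + p" using False ij by (auto simp: a_def)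
    ultimately show ?thesis unfolding letter_def by auto
  qed
  have rm: "a+L = length u \<or> u!(a+L-p) \<noteq> u!(a+L)"
  proof (cases "j = length u")
    case True then show ?thesis using aL by simp
  next
    case False
    then have "letter u (j - p + 1) \<noteq> letter u (j + 1)" using r by auto
    moreover have "j - p + 1 - 1 = a+L-p" "j+1-1 = a+L" using aL r(1) by auto
    ultimately show ?thesis unfolding letter_def by auto
  qed
  have "RUN (\<lambda>q. u!q) (length u) a L p"
    unfolding RUN_def using p0 r(1) aL ij per minp lm rm by blast
  then show "RUN (\<lambda>q. u!q) (length u) (i-1) (j+1-i) (period (factor u i j))"
    unfolding a_def L_def p_def x_def .
qed

theorem theorem2:
  fixes u :: "'a list" and n :: nat
  assumes "finite (UNIV :: 'a set)"
    and "n > 0" and "length u = n"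
  shows "(\<Sum>r\<in>runs u. run_exponent u r) < 4.1 * real n"
proof -
  obtain f :: "'a \<Rightarrow> nat" and m where f: "f ` UNIV = {i. i<m}" "inj_on f UNIV"
    using finite_imp_inj_to_nat_seg[OF assms(1)] by blast
  define w where "w q = u!q" for q
  define W0 :: "nat \<Rightarrow> int" where "W0 q = int (f (u!q))" for q
  define W1 :: "nat \<Rightarrow> int" where "W1 q = - W0 q" for q
  have hW0: "\<forall>q q'. W0 q = W0 q' \<longleftrightarrow> w q = w q'"
    using f(2) unfolding W0_def w_def inj_on_def by auto
  have hW1: "\<forall>q q'. W1 q = W1 q' \<longleftrightarrow> w q = w q'" using hW0 unfolding W1_def by auto
  define P where "P r = period (factor u (fst r) (snd r))" for r :: "nat \<times> nat"
  define A where "A r = fst r - 1" for r :: "nat \<times> nat"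
  define LL where "LL r = snd r + 1 - fst r" for r :: "nat \<times> nat"
  define WW where "WW r = (if snd r = n \<or> W0 (snd r) < W0 (snd r - P r) then W0 else W1)" for r
  define B where "B r = {s. A r < s \<and> s + P r \<le> A r + LL r \<and> lyndon (fac (WW r) s (P r))}" for r
  have RR: "RUN w n (A r) (LL r) (P r)" "1 \<le> fst r" "fst r \<le> snd r" "snd r \<le> n"
    if "r \<in> runs u" for r
  proof -
    obtain i j where r: "r = (i,j)" by (cases r)
    have "is_run u i j" using that r unfolding runs_def by auto
    from run_RUN[OF this] show "RUN w n (A r) (LL r) (P r)" "1 \<le> fst r" "fst r \<le> snd r" "snd r \<le> n"
      using assms(3) unfolding r A_def LL_def P_def w_def by auto
  qed
  have AL: "A r + LL r = snd r" if "r \<in> runs u" for r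
    using RR[OF that] unfolding A_def LL_def by auto
  have hWW: "\<forall>q q'. WW r q = WW r q' \<longleftrightarrow> w q = w q'" for r
    using hW0 hW1 unfolding WW_def by auto
  have oW: "A r + LL r = n \<or> WW r (A r + LL r) < WW r (A r + LL r - P r)" if "r \<in> runs u" for r
  proof (cases "snd r = n \<or> W0 (snd r) < W0 (snd r - P r)")
    case True then show ?thesis using AL[OF that] unfolding WW_def by auto
  next
    case False
    then have "w (snd r - P r) \<noteq> w (snd r)" using RR(1)[OF that] AL[OF that] unfolding RUN_def by auto
    then have "W0 (snd r - P r) \<noteq> W0 (snd r)" using hW0 by auto
    then have "W0 (snd r - P r) < W0 (snd r)" using False by auto
    then show ?thesis using False AL[OF that] unfolding WW_def W1_def by auto
  qed
  have fin: "finite (runs u)"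
  proof (rule finite_subset[of _ "{0..n} \<times> {0..n}"])
    show "runs u \<subseteq> {0..n} \<times> {0..n}"
    proof
      fix r assume "r \<in> runs u"
      then show "r \<in> {0..n} \<times> {0..n}" using RR[of r] by (cases r) auto
    qed
  qed auto
  have Bsub: "B r \<subseteq> {1..<n}" if "r \<in> runs u" for r
  proof
    fix s assume "s \<in> B r"
    then have "A r < s" "s + P r \<le> A r + LL r" unfolding B_def by auto
    moreover have "0 < P r" "A r + LL r \<le> n" using RR(1)[OF that] unfolding RUN_def by auto
    ultimately show "s \<in> {1..<n}" by auto
  qed
  have Bfin: "finite (B r)" if "r \<in> runs u" for r using Bsub[OF that] finite_subset by blast
  have exp: "run_exponent u r \<le> 3 * real (card (B r))" if "r \<in> runs u" for r
  proof -
    have "run_exponent u r = real (LL r) / real (P r)"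
      unfolding run_exponent_def LL_def P_def using RR(3)[OF that] by auto
    also have "\<dots> \<le> 3 * real (card (B r))" unfolding B_def by (rule count_B[OF RR(1)[OF that] hWW])
    finally show ?thesis .
  qed
  have disj: "B r \<inter> B r' = {}" if "r \<in> runs u" "r' \<in> runs u" "r \<noteq> r'" for r r'
  proof (rule ccontr)
    assume "B r \<inter> B r' \<noteq> {}"
    then obtain s where s: "s \<in> B r" "s \<in> B r'" by auto
    have rel: "WW r = WW r' \<or> (\<forall>q q'. WW r q < WW r q' \<longleftrightarrow> WW r' q' < WW r' q)"
      unfolding WW_def W1_def by auto
    have "A r = A r' \<and> LL r = LL r'"
      by (rule disjoint[OF RR(1)[OF that(1)] RR(1)[OF that(2)] hWW hWW rel oW[OF that(1)] oW[OF that(2)]])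
        (use s in \<open>auto simp: B_def\<close>)
    then have "r = r'" using RR[OF that(1)] RR[OF that(2)] AL[OF that(1)] AL[OF that(2)]
      unfolding A_def by (cases r, cases r') auto
    then show False using that(3) by simp
  qed
  have "(\<Sum>r\<in>runs u. run_exponent u r) \<le> (\<Sum>r\<in>runs u. 3 * real (card (B r)))"
    by (rule sum_mono) (rule exp)
  also have "\<dots> = 3 * real (\<Sum>r\<in>runs u. card (B r))" by (simp add: sum_distrib_left)
  also have "(\<Sum>r\<in>runs u. card (B r)) = card (\<Union>r\<in>runs u. B r)"
    by (rule card_UN_disjoint[symmetric]) (use fin Bfin disj in auto)
  also have "card (\<Union>r\<in>runs u. B r) \<le> card {1..<n}"
    by (rule card_mono) (use Bsub in auto)
  also have "card {1..<n} = n - 1" by simp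
  finally have "(\<Sum>r\<in>runs u. run_exponent u r) \<le> 3 * real (n-1)" by simp
  also have "\<dots> < 4.1 * real n" using assms(2) by (simp add: of_nat_diff)
  finally show ?thesis .
qed

end
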